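(* Let $m,d,\ell\ge1$, $n\ge2$ a power of two, $N\ge2$, $t>0$, and let $f\colon[N]^m\to\{0,1\}^{\ell\log n+(\ell+1)n}$ be $d$-local. Let $S\subseteq[m]$ be the set of input coordinates that either affect more than $t$ output bits of $f$ or affect at least one of the first $\ell\log n$ output bits. Then the fraction of shift vectors $i\in(\{0,1\}^{\log n})^\ell$ that are bad (with respect to $f$, $S$) is at most $4d\big(\frac{t}{\ell n}\big)^{\ell}$.
   Context: A function is $d$-local if each output bit depends on at most $d$ input coordinates; an input coordinate "affects" an output bit if that bit depends on it. The $\ell\log n+(\ell+1)n$ output bits of $f$ are named, in order, $\mathbf{i}^{(1)},\dots,\mathbf{i}^{(\ell)}$ (each a block of $\log n$ bits), then $\mathbf{x}=(\mathbf{x}_1,\dots,\mathbf{x}_n)$, then $\mathbf{y}^{(1)},\dots,\mathbf{y}^{(\ell)}$ (each in $\{0,1\}^n$). Elements $i^{(j)}\in\{0,1\}^{\log n}$ are identified with elements of $\mathbb{Z}_n$, and indices of $\mathbf{x},\mathbf{y}^{(j)}$ are taken modulo $n$. For a shift vector $i=(i^{(1)},\dots,i^{(\ell)})\in(\{0,1\}^{\log n})^\ell$ and $u\in[n]$, the equality block $B_u(i)$ is the set of $\ell+1$ output positions $(\mathbf{x}_u,\mathbf{y}^{(1)}_{u-i^{(1)}},\dots,\mathbf{y}^{(\ell)}_{u-i^{(\ell)}})$. A block is covered if some input coordinate $c\notin S$ affects every output bit in the block. A shift vector $i$ is bad if at least $n/4$ of the blocks $B_u(i)$, $u\in[n]$,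 are covered. *)

theory Defs
  imports "HOL-Analysis.Analysis"
begin

text \<open>Outputs: bit-strings of length L,
  represented as functions nat => bool (bit p for p < L). Output positions are 0-based.\<close>

definition inputs :: "nat \<Rightarrow> nat \<Rightarrow> (nat \<Rightarrow> nat) set" where
  "inputs N m = PiE {0..<m} (\<lambda>_. {0..<N})"

definition affects :: "nat \<Rightarrow> nat \<Rightarrow> ((nat \<Rightarrow> nat) \<Rightarrow> nat \<Rightarrow> bool) \<Rightarrow> nat \<Rightarrow> nat \<Rightarrow> bool" where
  "affects N m f c p \<longleftrightarrow> c < m \<and>
     (\<exists>x\<in>inputs N m. \<exists>v<N. f x p \<noteq> f (x(c := v)) p)"

definition local_fun :: "nat \<Rightarrow> nat \<Rightarrow> nat \<Rightarrow> nat \<Rightarrow> ((nat \<Rightarrow> nat) \<Rightarrow> nat \<Rightarrow> bool) \<Rightarrow> bool" where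
  "local_fun d N m L f \<longleftrightarrow> (\<forall>p<L. card {c. affects N m f c p} \<le> d)"

text \<open>Output layout with k = log n: blocks i^(1..l) at positions [0, l*k);
  x_u (u = 0..n-1) at position l*k + u; y^(j)_w (j = 0..l-1, w = 0..n-1) at
  position l*k + n + j*n + w.\<close>

definition x_pos :: "nat \<Rightarrow> nat \<Rightarrow> nat \<Rightarrow> nat \<Rightarrow> nat" where
  "x_pos l k n u = l * k + u"

definition y_pos :: "nat \<Rightarrow> nat \<Rightarrow> nat \<Rightarrow> nat \<Rightarrow> nat \<Rightarrow> nat" where
  "y_pos l k n j w = l * k + n + j * n + w"

definition eq_block :: "nat \<Rightarrow> nat \<Rightarrow> nat \<Rightarrow> (nat \<Rightarrow> nat) \<Rightarrow> nat \<Rightarrow> nat set" where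
  "eq_block l k n i u =
     insert (x_pos l k n u)
       ((\<lambda>j. y_pos l k n j (nat ((int u - int (i j)) mod int n))) ` {0..<l})"

definition shift_vectors :: "nat \<Rightarrow> nat \<Rightarrow> (nat \<Rightarrow> nat) set" where
  "shift_vectors l n = PiE {0..<l} (\<lambda>_. {0..<n})"

definition covered :: "nat \<Rightarrow> nat \<Rightarrow> ((nat \<Rightarrow> nat) \<Rightarrow> nat \<Rightarrow> bool) \<Rightarrow> nat set \<Rightarrow> nat set \<Rightarrow> bool" where
  "covered N m f S B \<longleftrightarrow> (\<exists>c. c < m \<and> c \<notin> S \<and> (\<forall>p\<in>B. affects N m f c p))"

definition bad_shift :: "nat \<Rightarrow> nat \<Rightarrow> ((nat \<Rightarrow> nat) \<Rightarrow> nat \<Rightarrow> bool) \<Rightarrow> nat set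
     \<Rightarrow> nat \<Rightarrow> nat \<Rightarrow> nat \<Rightarrow> (nat \<Rightarrow> nat) \<Rightarrow> bool" where
  "bad_shift N m f S l k n i \<longleftrightarrow>
     real (card {u\<in>{0..<n}. covered N m f S (eq_block l k n i u)}) \<ge> real n / 4"

end

theory Submission imports Defs begin
lemma amgm:
  fixes x :: "'a \<Rightarrow> real"
  assumes "finite S" "S \<noteq> {}" "\<And>i. i \<in> S \<Longrightarrow> x i \<ge> 0" "sum x S \<le> s"
  shows "prod x S \<le> (s / card S) ^ card S"
proof -
  have c: "card S > 0" using assms card_gt_0_iff by blast
  have P0: "prod x S \<ge> 0" using assms prod_nonneg by blast
  have "(\<Prod>i \<in> S. x i) powr (1 / card S) \<le> (\<Sum>i \<in> S. x i / card S)"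
    using arith_geom_mean[OF assms(1,2)] assms(3) by blast
  also have "\<dots> = sum x S / card S" by (simp add: sum_divide_distrib)
  also have "\<dots> \<le> s / card S" using assms(4) c by (simp add: divide_right_mono)
  finally have h: "prod x S powr (1 / card S) \<le> s / card S" .
  show ?thesis
  proof (cases "prod x S = 0")
    case True
    then show ?thesis using h c by simp
  next
    case False
    hence pos: "prod x S > 0" using P0 by simp
    have "prod x S = (prod x S powr (1 / card S)) ^ card S"
      using pos c by (simp add: powr_realpow[symmetric] powr_powr)
    also have "\<dots> \<le> (s / card S) ^ card S"
      by (rule power_mono[OF h]) simp
    finally show ?thesis .
  qed
qed

lemma shift_bij:
  assumes "u < n"
  shows "card {v\<in>{0..<n}. Q (nat ((int u - int v) mod int n))} = card {w\<in>{0..<n}. Q w}"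
proof -
  define g where "g = (\<lambda>v::nat. nat ((int u - int v) mod int n))"
  have n0: "int n > 0" using assms by simp
  have gg: "g (g v) = v" if "v < n" for v
  proof -
    have nn: "int (nat ((int u - int v) mod int n)) = (int u - int v) mod int n"
      using n0 by simp
    have "(int u - (int u - int v) mod int n) mod int n = (int u - (int u - int v)) mod int n"
      by (rule mod_diff_right_eq)
    also have "\<dots> = int v" using that by simp
    finally have e: "(int u - (int u - int v) mod int n) mod int n = int v" .
    have "g (g v) = nat ((int u - (int u - int v) mod int n) mod int n)"
      unfolding g_def nn ..
    also have "\<dots> = v" unfolding e by simp
    finally show ?thesis .
  qed
  have gn: "g v < n" for v unfolding g_def using n0
    by (simp add: nat_less_iff)
  define A where "A = {v\<in>{0..<n}. Q (g v)}"
  have inj: "inj_on g A"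
  proof (rule inj_onI)
    fix x y assume h: "x \<in> A" "y \<in> A" "g x = g y"
    have "x = g (g x)" using h(1) gg unfolding A_def by simp
    also have "\<dots> = g (g y)" using h(3) by simp
    also have "\<dots> = y" using h(2) gg unfolding A_def by simp
    finally show "x = y" .
  qed
  have im: "g ` A = {w\<in>{0..<n}. Q w}"
  proof
    show "g ` A \<subseteq> {w\<in>{0..<n}. Q w}" using gn unfolding A_def by auto
    show "{w\<in>{0..<n}. Q w} \<subseteq> g ` A"
    proof
      fix w assume w: "w \<in> {w\<in>{0..<n}. Q w}"
      hence "g (g w) = w" using gg by simp
      moreover have "g w \<in> A" using w gn \<open>g (g w) = w\<close> unfolding A_def by simp
      ultimately show "w \<in> g ` A" by (metis image_eqI)
    qed
  qed
  have "card {w\<in>{0..<n}. Q w} = card A" using card_image[OF inj] im by simp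
  then show ?thesis unfolding A_def g_def by (rule sym)
qed

lemma card_ind:
  assumes "finite A"
  shows "card {x\<in>A. P x} = (\<Sum>x\<in>A. if P x then 1 else 0)"
proof -
  have "card {x\<in>A. P x} = (\<Sum>x\<in>{x\<in>A. P x}. (1::nat))" by (rule card_eq_sum)
  also have "\<dots> = (\<Sum>x\<in>A. if P x then 1 else 0)" by (rule sum.inter_filter[OF assms])
  finally show ?thesis .
qed

lemma divmod_inj:
  fixes n j j' w w' :: nat
  assumes "w < n" "w' < n" "j * n + w = j' * n + w'"
  shows "j = j' \<and> w = w'"
proof -
  have n0: "n > 0" using assms(1) by simp
  have "w = (j * n + w) mod n" using assms(1) by simp
  also have "\<dots> = (j' * n + w') mod n" using assms(3) by (rule arg_cong)
  also have "\<dots> = w'" using assms(2) by simp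
  finally have ww: "w = w'" .
  have "j = (j * n + w) div n" using assms(1) by simp
  also have "\<dots> = (j' * n + w') div n" using assms(3) by (rule arg_cong)
  also have "\<dots> = j'" using assms(2) by simp
  finally show ?thesis using ww by simp
qed

lemma lt_bound:
  fixes n j w l :: nat
  assumes "w < n" "j < l"
  shows "j * n + w < l * n"
proof -
  have "j * n + w < j * n + n" using assms by simp
  also have "\<dots> = (j + 1) * n" by simp
  also have "\<dots> \<le> l * n" using assms by (intro mult_right_mono) auto
  finally show ?thesis .
qed

theorem claim4:
  fixes m d l n k N :: nat and t :: real
    and f :: "(nat \<Rightarrow> nat) \<Rightarrow> nat \<Rightarrow> bool" and S :: "nat set"
  assumes "m \<ge> 1" and "d \<ge> 1" and "l \<ge> 1"
    and "n = 2 ^ k" and "n \<ge> 2"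
    and "N \<ge> 2" and "t > 0"
    and "local_fun d N m (l * k + (l + 1) * n) f"
    and "S = {c. c < m \<and>
               (real (card {p. p < l * k + (l + 1) * n \<and> affects N m f c p}) > t
                \<or> (\<exists>p < l * k. affects N m f c p))}"
  shows "real (card {i \<in> shift_vectors l n. bad_shift N m f S l k n i}) / real (card (shift_vectors l n))
           \<le> 4 * real d * (t / (real l * real n)) ^ l"
proof -
  define L where "L = l * k + (l + 1) * n"
  define aff where "aff = affects N m f"
  define C where "C = {c. c < m \<and> c \<notin> S}"
  define V where "V = shift_vectors l n"
  define bc where "bc = (\<lambda>c j. card {w\<in>{0..<n}. aff c (y_pos l k n j w)})"
  define Q where "Q = (\<lambda>c i u. \<forall>p\<in>eq_block l k n i u. aff c p)"
  define T where "T = (t / real l) ^ l"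
  have T0: "T \<ge> 0" unfolding T_def using assms by simp
  have finC: "finite C" unfolding C_def by simp
  have finV: "finite V" unfolding V_def shift_vectors_def by (simp add: finite_PiE)
  have cardV: "card V = n ^ l" unfolding V_def shift_vectors_def by (simp add: card_PiE)
  have npos: "n > 0" using assms by simp
  have cov: "covered N m f S B \<longleftrightarrow> (\<exists>c\<in>C. \<forall>p\<in>B. aff c p)" for B
    unfolding covered_def C_def aff_def by auto
  have Qiff: "Q c i u \<longleftrightarrow> aff c (x_pos l k n u) \<and>
      (\<forall>j\<in>{0..<l}. aff c (y_pos l k n j (nat ((int u - int (i j)) mod int n))))" for c i u
    unfolding Q_def eq_block_def by auto
  have cardQ: "card {i\<in>V. Q c i u} = (if aff c (x_pos l k n u) then (\<Prod>j\<in>{0..<l}. bc c j) else 0)"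
    if "u < n" for c u
  proof (cases "aff c (x_pos l k n u)")
    case True
    have "{i\<in>V. Q c i u} = PiE {0..<l} (\<lambda>j. {v\<in>{0..<n}. aff c (y_pos l k n j (nat ((int u - int v) mod int n)))})"
      unfolding V_def shift_vectors_def using True by (auto simp: Qiff PiE_iff extensional_def)
    hence "card {i\<in>V. Q c i u} = (\<Prod>j\<in>{0..<l}. card {v\<in>{0..<n}. aff c (y_pos l k n j (nat ((int u - int v) mod int n)))})"
      by (simp add: card_PiE)
    also have "\<dots> = (\<Prod>j\<in>{0..<l}. bc c j)"
      unfolding bc_def by (intro prod.cong refl shift_bij[OF that])
    finally show ?thesis using True by simp
  next
    case False
    then show ?thesis by (simp add: Qiff)
  qed
  have prodb: "(\<Prod>j\<in>{0..<l}. real (bc c j)) \<le> T" if "c \<in> C" for c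
  proof -
    have ct: "real (card {p. p < L \<and> aff c p}) \<le> t"
      using that unfolding C_def assms(9) L_def aff_def by auto
    have "(\<Sum>j\<in>{0..<l}. bc c j) = card (Sigma {0..<l} (\<lambda>j. {w\<in>{0..<n}. aff c (y_pos l k n j w)}))"
      unfolding bc_def by (simp add: card_SigmaI)
    also have "\<dots> \<le> card {p. p < L \<and> aff c p}"
    proof (rule card_inj_on_le[where f = "\<lambda>(j, w). y_pos l k n j w"])
      show "inj_on (\<lambda>(j, w). y_pos l k n j w) (Sigma {0..<l} (\<lambda>j. {w\<in>{0..<n}. aff c (y_pos l k n j w)}))"
      proof (rule inj_onI)
        fix x y
        assume h: "x \<in> Sigma {0..<l} (\<lambda>j. {w\<in>{0..<n}. aff c (y_pos l k n j w)})"
          "y \<in> Sigma {0..<l} (\<lambda>j. {w\<in>{0..<n}. aff c (y_pos l k n j w)})"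
          "(\<lambda>(j, w). y_pos l k n j w) x = (\<lambda>(j, w). y_pos l k n j w) y"
        obtain j w where x: "x = (j, w)" by (cases x)
        obtain j' w' where y: "y = (j', w')" by (cases y)
        have "w < n" "w' < n" using h(1,2) x y by auto
        moreover have "j * n + w = j' * n + w'" using h(3) x y unfolding y_pos_def by simp
        ultimately have "j = j' \<and> w = w'" by (rule divmod_inj)
        then show "x = y" using x y by simp
      qed
      show "(\<lambda>(j, w). y_pos l k n j w) ` (Sigma {0..<l} (\<lambda>j. {w\<in>{0..<n}. aff c (y_pos l k n j w)})) \<subseteq> {p. p < L \<and> aff c p}"
      proof (rule image_subsetI)
        fix x
        assume h: "x \<in> Sigma {0..<l} (\<lambda>j. {w\<in>{0..<n}. aff c (y_pos l k n j w)})"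
        obtain j w where x: "x = (j, w)" by (cases x)
        have hj: "j < l" "w < n" "aff c (y_pos l k n j w)" using h x by auto
        have "j * n + w < l * n" using lt_bound[OF hj(2,1)] .
        hence "y_pos l k n j w < L" unfolding y_pos_def L_def by (simp add: algebra_simps)
        then show "(\<lambda>(j, w). y_pos l k n j w) x \<in> {p. p < L \<and> aff c p}" using hj(3) x by simp
      qed
      show "finite {p. p < L \<and> aff c p}" by simp
    qed
    finally have "real (\<Sum>j\<in>{0..<l}. bc c j) \<le> real (card {p. p < L \<and> aff c p})"
      by (simp only: of_nat_le_iff)
    hence "real (\<Sum>j\<in>{0..<l}. bc c j) \<le> t" using ct by linarith
    hence "(\<Sum>j\<in>{0..<l}. real (bc c j)) \<le> t" by simp
    then have "(\<Prod>j\<in>{0..<l}. real (bc c j)) \<le> (t / card {0..<l}) ^ card {0..<l}"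
      using assms(3) by (intro amgm) auto
    then show ?thesis unfolding T_def by simp
  qed
  have dloc: "card {c\<in>C. aff c (x_pos l k n u)} \<le> d" if "u < n" for u
  proof -
    have "x_pos l k n u < L" unfolding x_pos_def L_def using that by simp
    hence "card {c. aff c (x_pos l k n u)} \<le> d"
      using assms(8) unfolding local_fun_def L_def aff_def by auto
    moreover have "{c. aff c (x_pos l k n u)} \<subseteq> {..<m}"
      unfolding aff_def affects_def by blast
    hence "finite {c. aff c (x_pos l k n u)}" by (rule finite_subset) simp
    hence "card {c\<in>C. aff c (x_pos l k n u)} \<le> card {c. aff c (x_pos l k n u)}"
      by (rule card_mono) blast
    ultimately show ?thesis by linarith
  qed
  define cnt where "cnt = (\<lambda>i. card {u\<in>{0..<n}. covered N m f S (eq_block l k n i u)})"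
  define Bd where "Bd = {i \<in> V. bad_shift N m f S l k n i}"
  have finBd: "finite Bd" unfolding Bd_def using finV by simp
  have step1: "real (card Bd) * (real n / 4) \<le> (\<Sum>i\<in>V. real (cnt i))"
  proof -
    have "real (card Bd) * (real n / 4) = (\<Sum>i\<in>Bd. real n / 4)" by simp
    also have "\<dots> \<le> (\<Sum>i\<in>Bd. real (cnt i))"
      by (intro sum_mono) (auto simp: Bd_def bad_shift_def cnt_def)
    also have "\<dots> \<le> (\<Sum>i\<in>V. real (cnt i))"
      by (intro sum_mono2 finV) (auto simp: Bd_def)
    finally show ?thesis .
  qed
  have step2: "cnt i \<le> (\<Sum>u\<in>{0..<n}. card {c\<in>C. Q c i u})" for i
  proof -
    have "cnt i = (\<Sum>u\<in>{0..<n}. if covered N m f S (eq_block l k n i u) then 1 else 0)"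
      unfolding cnt_def by (rule card_ind) simp
    also have "\<dots> \<le> (\<Sum>u\<in>{0..<n}. card {c\<in>C. Q c i u})"
    proof (intro sum_mono)
      fix u
      show "(if covered N m f S (eq_block l k n i u) then 1 else 0) \<le> card {c\<in>C. Q c i u}"
      proof (cases "covered N m f S (eq_block l k n i u)")
        case True
        then obtain c where "c \<in> C" "Q c i u" unfolding cov Q_def by blast
        hence "{c\<in>C. Q c i u} \<noteq> {}" by blast
        hence "card {c\<in>C. Q c i u} \<ge> 1" using finC
          by (simp add: Suc_le_eq card_gt_0_iff)
        then show ?thesis using True by simp
      qed simp
    qed
    finally show ?thesis .
  qed
  have step3: "(\<Sum>i\<in>V. \<Sum>u\<in>{0..<n}. card {c\<in>C. Q c i u}) = (\<Sum>u\<in>{0..<n}. \<Sum>c\<in>C. card {i\<in>V. Q c i u})"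
  proof -
    have "(\<Sum>i\<in>V. \<Sum>u\<in>{0..<n}. card {c\<in>C. Q c i u}) = (\<Sum>i\<in>V. \<Sum>u\<in>{0..<n}. \<Sum>c\<in>C. if Q c i u then 1 else 0)"
      using finC by (simp add: card_ind)
    also have "\<dots> = (\<Sum>u\<in>{0..<n}. \<Sum>i\<in>V. \<Sum>c\<in>C. if Q c i u then 1 else 0)"
      by (rule sum.swap)
    also have "\<dots> = (\<Sum>u\<in>{0..<n}. \<Sum>c\<in>C. \<Sum>i\<in>V. if Q c i u then 1 else 0)"
      by (intro sum.cong refl sum.swap)
    also have "\<dots> = (\<Sum>u\<in>{0..<n}. \<Sum>c\<in>C. card {i\<in>V. Q c i u})"
      using finV by (simp add: card_ind)
    finally show ?thesis .
  qed
  have step4: "(\<Sum>u\<in>{0..<n}. \<Sum>c\<in>C. real (card {i\<in>V. Q c i u})) \<le> T * (real n * real d)"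
  proof -
    have "(\<Sum>u\<in>{0..<n}. \<Sum>c\<in>C. real (card {i\<in>V. Q c i u}))
        \<le> (\<Sum>u\<in>{0..<n}. \<Sum>c\<in>C. if aff c (x_pos l k n u) then T else 0)"
    proof (intro sum_mono)
      fix u c assume "u \<in> {0..<n}" "c \<in> C"
      then show "real (card {i\<in>V. Q c i u}) \<le> (if aff c (x_pos l k n u) then T else 0)"
        using cardQ prodb by auto
    qed
    also have "\<dots> = (\<Sum>u\<in>{0..<n}. T * real (card {c\<in>C. aff c (x_pos l k n u)}))"
      using finC by (simp add: card_ind sum.If_cases mult.commute)
    also have "\<dots> \<le> (\<Sum>u\<in>{0..<n}. T * real d)"
      using dloc T0 by (intro sum_mono mult_left_mono) auto
    also have "\<dots> = T * (real n * real d)" by simp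
    finally show ?thesis .
  qed
  have "real (card Bd) * (real n / 4) \<le> T * (real n * real d)"
  proof -
    have "(\<Sum>i\<in>V. real (cnt i)) \<le> (\<Sum>i\<in>V. real (\<Sum>u\<in>{0..<n}. card {c\<in>C. Q c i u}))"
      by (intro sum_mono) (simp only: of_nat_le_iff step2)
    also have "\<dots> = real (\<Sum>i\<in>V. \<Sum>u\<in>{0..<n}. card {c\<in>C. Q c i u})" by simp
    also have "\<dots> = (\<Sum>u\<in>{0..<n}. \<Sum>c\<in>C. real (card {i\<in>V. Q c i u}))"
      unfolding step3 by simp
    finally show ?thesis using step1 step4 by linarith
  qed
  hence cb: "real (card Bd) \<le> 4 * real d * T" using npos
    by (simp add: field_simps)
  have "real (card Bd) / real (card V) \<le> 4 * real d * T / real n ^ l"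
    using cb npos cardV by (simp add: divide_right_mono)
  also have "\<dots> = 4 * real d * (t / (real l * real n)) ^ l"
    unfolding T_def by (simp add: power_divide power_mult_distrib)
  finally show ?thesis unfolding Bd_def V_def .
qed
end
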